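(* Let $n\ge1$ and $m\in\mathbb{N}$. Let $\mathcal{Q}_m=\bigoplus_{t=0}^m H_t\subseteq H^2(\mathbb{T}^n)$ and let $p\in H_m$ be a homogeneous polynomial of degree $m$ with $\|p\|_2=1$. Then the operator $S_p=P_{\mathcal{Q}_m}T_p|_{\mathcal{Q}_m}$ admits a lift, i.e. there exists $\varphi\in\mathcal{S}(\mathbb{D}^n)$ with $S_p=P_{\mathcal{Q}_m}T_\varphi|_{\mathcal{Q}_m}$, if and only if $p$ is a unimodular constant multiple of a monomial.
   Context: $H_t\subseteq\mathbb{C}[z_1,\dots,z_n]$ is the space of homogeneous polynomials of degree $t$, viewed as a subspace of the Hardy space $H^2(\mathbb{T}^n)$ (closed subspace of $L^2(\mathbb{T}^n,\mu)$, $\mu$ normalized Lebesgue measure, of functions with Fourier coefficients supported in $\mathbb{Z}_+^n$); thus $\mathcal{Q}_m$ is the space of polynomials of degree at most $m$, which is invariant under all $T_{z_i}^*$. $\|\cdot\|_2$ is the $H^2$ norm, $T_\varphi f=\varphi f$, $P_{\mathcal{Q}_m}$ the orthogonal projection onto $\mathcal{Q}_m$, and $\mathcal{S}(\mathbb{D}^n)$ the closed unit ball of $H^\infty(\mathbb{D}^n)$ (sup norm). *)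

theory Defs
  imports "HOL-Analysis.Analysis"
begin

(* Multi-indices in Z_+^n are functions 'n => nat, with 'n a finite (nonempty) index type,
   so n = CARD('n) >= 1.  An element of H^2(T^n) (resp. a power series on D^n) is
   represented by its family of Fourier/Taylor coefficients ('n => nat) => complex. *)

type_synonym 'n mindex = "'n \<Rightarrow> nat"

definition mdeg :: "'n::finite mindex \<Rightarrow> nat" where
  "mdeg \<alpha> = (\<Sum>i\<in>UNIV. \<alpha> i)"

definition mmonom :: "('n::finite \<Rightarrow> complex) \<Rightarrow> 'n mindex \<Rightarrow> complex" where
  "mmonom z \<alpha> = (\<Prod>i\<in>UNIV. z i ^ \<alpha> i)"

definition polydisc :: "('n::finite \<Rightarrow> complex) set" where
  "polydisc = {z. \<forall>i. norm (z i) < 1}"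

(* Schur class S(D^n): coefficient families of holomorphic functions on D^n
   (power series converging (absolutely) at every point of D^n) with sup norm <= 1 *)
definition schur_class :: "('n::finite mindex \<Rightarrow> complex) \<Rightarrow> bool" where
  "schur_class c \<longleftrightarrow>
     (\<forall>z\<in>polydisc. (\<lambda>\<alpha>. norm (c \<alpha> * mmonom z \<alpha>)) summable_on UNIV
                   \<and> norm (infsum (\<lambda>\<alpha>. c \<alpha> * mmonom z \<alpha>) UNIV) \<le> 1)"

definition homog :: "nat \<Rightarrow> ('n::finite mindex \<Rightarrow> complex) set" where
  "homog t = {p. \<forall>\<alpha>. p \<alpha> \<noteq> 0 \<longrightarrow> mdeg \<alpha> = t}"

definition Qspace :: "nat \<Rightarrow> ('n::finite mindex \<Rightarrow> complex) set" where
  "Qspace m = {q. \<forall>\<alpha>. q \<alpha> \<noteq> 0 \<longrightarrow> mdeg \<alpha> \<le> m}"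

definition h2norm :: "('n::finite mindex \<Rightarrow> complex) \<Rightarrow> real" where
  "h2norm f = sqrt (infsum (\<lambda>\<alpha>. (cmod (f \<alpha>))\<^sup>2) UNIV)"

(* Fourier coefficients of the product phi * q (Cauchy product of coefficients);
   T_phi f = phi f *)
definition mult_coeffs ::
  "('n::finite mindex \<Rightarrow> complex) \<Rightarrow> ('n mindex \<Rightarrow> complex) \<Rightarrow> 'n mindex \<Rightarrow> complex" where
  "mult_coeffs c q \<beta> = (\<Sum>\<alpha>\<in>{\<alpha>. \<forall>i. \<alpha> i \<le> \<beta> i}. c \<alpha> * q (\<beta> - \<alpha>))"

definition proj_Q :: "nat \<Rightarrow> ('n::finite mindex \<Rightarrow> complex) \<Rightarrow> 'n mindex \<Rightarrow> complex" where
  "proj_Q m f = (\<lambda>\<beta>. if mdeg \<beta> \<le> m then f \<beta> else 0)"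

definition compress :: "nat \<Rightarrow> ('n::finite mindex \<Rightarrow> complex) \<Rightarrow> ('n mindex \<Rightarrow> complex) \<Rightarrow> 'n mindex \<Rightarrow> complex" where
  "compress m c q = proj_Q m (mult_coeffs c q)"

definition monomial_coeffs :: "'n::finite mindex \<Rightarrow> 'n mindex \<Rightarrow> complex" where
  "monomial_coeffs \<alpha> = (\<lambda>\<beta>. if \<beta> = \<alpha> then 1 else 0)"

end

theory Submission
  imports Defs
begin


definition rou :: "nat \<Rightarrow> int \<Rightarrow> complex" where
  "rou N s = exp (2 * of_real pi * \<i> * of_int s / of_nat N)"

lemma rou_add: "rou N (a + b) = rou N a * rou N b"
  unfolding rou_def by (simp add: exp_add[symmetric] ring_distribs add_divide_distrib)

lemma rou_norm[simp]: "cmod (rou N a) = 1"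
  unfolding rou_def by (simp add: norm_exp_eq_Re)

lemma rou_cnj: "cnj (rou N a) = rou N (-a)"
  unfolding rou_def exp_cnj by simp

lemma rou_pow: "rou N a ^ k = rou N (int k * a)"
proof (induction k)
  case 0 then show ?case by (simp add: rou_def)
next
  case (Suc k)
  have "rou N a ^ Suc k = rou N a * rou N (int k * a)" using Suc by simp
  also have "\<dots> = rou N (a + int k * a)" by (simp add: rou_add)
  also have "a + int k * a = int (Suc k) * a" by (simp add: algebra_simps)
  finally show ?case .
qed

lemma rou_eq_1: assumes "N > 0" shows "rou N s = 1 \<longleftrightarrow> int N dvd s"
proof -
  have "rou N s = 1 \<longleftrightarrow> (\<exists>n::int. 2 * pi * of_int s / real N = of_int (2 * n) * pi)"
    unfolding rou_def exp_eq_1 using assms by (simp add: Re_divide Im_divide power2_eq_square)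
  also have "\<dots> \<longleftrightarrow> (\<exists>n::int. s = n * int N)"
  proof -
    have "\<And>n::int. 2 * pi * of_int s / real N = of_int (2 * n) * pi \<longleftrightarrow> s = n * int N"
    proof -
      fix n :: int
      have "2 * pi * of_int s / real N = of_int (2 * n) * pi \<longleftrightarrow> 2 * pi * of_int s = of_int (2 * n) * pi * real N"
        using assms by (simp add: divide_simps)
      also have "\<dots> \<longleftrightarrow> real_of_int s = of_int n * real N" using pi_gt_zero by (auto simp: algebra_simps)
      also have "\<dots> \<longleftrightarrow> s = n * int N"
        by (metis of_int_eq_iff of_int_mult of_int_of_nat_eq)
      finally show "?thesis n" .
    qed
    then show ?thesis by simp
  qed
  also have "\<dots> \<longleftrightarrow> int N dvd s" by (auto simp: dvd_def mult.commute)
  finally show ?thesis .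
qed

lemma rou_sum:
  assumes "N > 0"
  shows "(\<Sum>j<N. rou N (int j * s)) = (if int N dvd s then of_nat N else 0)"
proof -
  define x where "x = rou N s"
  have eq: "rou N (int j * s) = x ^ j" for j by (simp add: x_def rou_pow)
  have xN: "x ^ N = 1"
    unfolding x_def rou_pow using rou_eq_1[OF assms, of "int N * s"] by simp
  have "(\<Sum>j<N. rou N (int j * s)) = (\<Sum>j<N. x ^ j)" by (simp add: eq)
  also have "\<dots> = (if x = 1 then of_nat N else (1 - x ^ N) / (1 - x))" by (rule sum_gp_strict)
  also have "\<dots> = (if int N dvd s then of_nat N else 0)"
    using xN rou_eq_1[OF assms, of s] by (simp add: x_def)
  finally show ?thesis .
qed



lemma geom_nat: "(\<Sum>t<K. (B - 1) * B ^ t) + 1 = (B::nat) ^ K" if "B > 0"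
proof (induction K)
  case 0 then show ?case by simp
next
  case (Suc K)
  have "(\<Sum>t<Suc K. (B - 1) * B ^ t) + 1 = (B - 1) * B ^ K + B ^ K"
    using Suc by simp
  also have "\<dots> = B ^ Suc K" using that by (cases B) (auto simp: algebra_simps)
  finally show ?case .
qed

lemma low_bound:
  fixes k \<alpha> :: "'a \<Rightarrow> nat"
  assumes "finite J" "inj_on k J" "\<And>i. i \<in> J \<Longrightarrow> \<alpha> i < B" "\<And>i. i \<in> J \<Longrightarrow> k i < K" "B > 0"
  shows "(\<Sum>i\<in>J. \<alpha> i * B ^ k i) < B ^ K"
proof -
  have B: "B > 0" if "J \<noteq> {}" using assms(5) by simp
  show ?thesis
  proof (cases "J = {}")
    case True
    then show ?thesis using assms(5) by simp
  next
    case False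
    have "(\<Sum>i\<in>J. \<alpha> i * B ^ k i) \<le> (\<Sum>i\<in>J. (B - 1) * B ^ k i)"
      by (rule sum_mono, rule mult_right_mono) (use assms(3) in \<open>fastforce\<close>)+
    also have "\<dots> = (\<Sum>t\<in>k ` J. (B - 1) * B ^ t)"
      using sum.reindex[OF assms(2), of "\<lambda>t. (B - 1) * B ^ t"] by simp
    also have "\<dots> \<le> (\<Sum>t<K. (B - 1) * B ^ t)"
      by (rule sum_mono2) (use assms(4) in auto)
    also have "\<dots> < B ^ K" using geom_nat[OF B[OF False], of K] by linarith
    finally show ?thesis .
  qed
qed

lemma digit:
  fixes k \<alpha> :: "'a \<Rightarrow> nat"
  assumes fin: "finite I" and inj: "inj_on k I" and dig: "\<And>i. i \<in> I \<Longrightarrow> \<alpha> i < B" and i0: "i0 \<in> I"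
  shows "(\<Sum>i\<in>I. \<alpha> i * B ^ k i) div B ^ k i0 mod B = \<alpha> i0"
proof -
  have B: "B > 0" using dig[OF i0] by simp
  define L where "L = {i\<in>I. k i < k i0}"
  define U where "U = {i\<in>I. k i > k i0}"
  have I: "I = L \<union> ({i0} \<union> U)" unfolding L_def U_def using inj i0
    by (auto simp: inj_on_def) (metis linorder_neqE_nat)
  have d1: "L \<inter> ({i0} \<union> U) = {}" "{i0} \<inter> U = {}" unfolding L_def U_def by auto
  have fL: "finite L" "finite U" using fin unfolding L_def U_def by auto
  have "(\<Sum>i\<in>I. \<alpha> i * B ^ k i) = (\<Sum>i\<in>L. \<alpha> i * B ^ k i) + (\<alpha> i0 * B ^ k i0 + (\<Sum>i\<in>U. \<alpha> i * B ^ k i))"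
    unfolding I using d1 fL by (simp add: sum.union_disjoint)
  also have "(\<Sum>i\<in>U. \<alpha> i * B ^ k i) = B ^ k i0 * (B * (\<Sum>i\<in>U. \<alpha> i * B ^ (k i - k i0 - 1)))"
  proof -
    have "\<And>i. i \<in> U \<Longrightarrow> \<alpha> i * B ^ k i = B ^ k i0 * (B * (\<alpha> i * B ^ (k i - k i0 - 1)))"
    proof -
      fix i assume "i \<in> U"
      then have "k i = k i0 + Suc (k i - k i0 - 1)" unfolding U_def by auto
      then have "B ^ k i = B ^ k i0 * (B * B ^ (k i - k i0 - 1))" by (metis power_add power_Suc)
      then show "\<alpha> i * B ^ k i = B ^ k i0 * (B * (\<alpha> i * B ^ (k i - k i0 - 1)))" by simp
    qed
    note h = this
    show ?thesis unfolding sum_distrib_left by (rule sum.cong) (use h in auto)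
  qed
  finally have eq: "(\<Sum>i\<in>I. \<alpha> i * B ^ k i) = (\<Sum>i\<in>L. \<alpha> i * B ^ k i) + B ^ k i0 * (\<alpha> i0 + B * (\<Sum>i\<in>U. \<alpha> i * B ^ (k i - k i0 - 1)))"
    by (simp add: algebra_simps)
  have lt: "(\<Sum>i\<in>L. \<alpha> i * B ^ k i) < B ^ k i0"
    by (rule low_bound) (use fL inj dig B in \<open>auto simp: L_def intro: inj_on_subset\<close>)
  have "(\<Sum>i\<in>I. \<alpha> i * B ^ k i) div B ^ k i0 = \<alpha> i0 + B * (\<Sum>i\<in>U. \<alpha> i * B ^ (k i - k i0 - 1))"
    unfolding eq using lt B by simp
  then show ?thesis using dig[OF i0] by simp
qed

lemma digits_inj:
  fixes k \<alpha> \<gamma> :: "'a \<Rightarrow> nat"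
  assumes "finite I" "inj_on k I" "\<And>i. i \<in> I \<Longrightarrow> \<alpha> i < B" "\<And>i. i \<in> I \<Longrightarrow> \<gamma> i < B"
    "(\<Sum>i\<in>I. \<alpha> i * B ^ k i) = (\<Sum>i\<in>I. \<gamma> i * B ^ k i)" "i0 \<in> I"
  shows "\<alpha> i0 = \<gamma> i0"
  using digit[of I k \<alpha> B i0] digit[of I k \<gamma> B i0] assms by simp



lemma coord_le_mdeg: "\<beta> i \<le> mdeg (\<beta> :: 'n::finite mindex)"
  unfolding mdeg_def by (rule member_le_sum) auto

lemma finite_mdeg_less: "finite {\<beta> :: 'n::finite mindex. mdeg \<beta> < N}"
proof (rule finite_subset)
  show "{\<beta> :: 'n mindex. mdeg \<beta> < N} \<subseteq> PiE UNIV (\<lambda>_. {..<N})"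
  proof
    fix \<beta> :: "'n mindex" assume "\<beta> \<in> {\<beta>. mdeg \<beta> < N}"
    then have "\<beta> i < N" for i using coord_le_mdeg[of \<beta> i] by simp
    then show "\<beta> \<in> PiE UNIV (\<lambda>_. {..<N})" unfolding PiE_UNIV_domain by auto
  qed
  show "finite (PiE (UNIV :: 'n set) (\<lambda>_. {..<N}))" by (rule finite_PiE) auto
qed

lemma mmonom_scale: "mmonom (\<lambda>i. c * w i) \<beta> = c ^ mdeg \<beta> * mmonom w \<beta>"
  unfolding mmonom_def mdeg_def by (simp add: power_mult_distrib prod.distrib power_sum)

lemma norm_mmonom: "(\<And>i. cmod (w i) = 1) \<Longrightarrow> cmod (mmonom w \<beta>) = 1"
  unfolding mmonom_def prod_norm[symmetric] by (simp add: norm_power)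

lemma infsum_sum_swap:
  fixes f :: "'j \<Rightarrow> 'a \<Rightarrow> complex"
  assumes "finite J" "\<And>j. j \<in> J \<Longrightarrow> f j summable_on S"
  shows "(\<lambda>x. \<Sum>j\<in>J. f j x) summable_on S \<and> infsum (\<lambda>x. \<Sum>j\<in>J. f j x) S = (\<Sum>j\<in>J. infsum (f j) S)"
  using assms
proof (induction J rule: finite_induct)
  case empty then show ?case by simp
next
  case (insert a F)
  then have IH: "(\<lambda>x. \<Sum>j\<in>F. f j x) summable_on S" "infsum (\<lambda>x. \<Sum>j\<in>F. f j x) S = (\<Sum>j\<in>F. infsum (f j) S)"
    by auto
  have fa: "f a summable_on S" using insert by auto
  show ?case using insert(1,2) IH fa by (simp add: summable_on_add infsum_add)
qed



lemma rou_zero[simp]: "rou N 0 = 1" by (simp add: rou_def)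

lemma rou_prod: "finite I \<Longrightarrow> (\<Prod>i\<in>I. rou N (f i)) = rou N (\<Sum>i\<in>I. f i)"
  by (induction I rule: finite_induct) (simp_all add: rou_add)

lemma mmonom_rou:
  "mmonom (\<lambda>i. rou N (int j * l i)) \<beta> = rou N (int j * (\<Sum>i\<in>UNIV. int (\<beta> i) * l i))"
proof -
  have "mmonom (\<lambda>i. rou N (int j * l i)) \<beta> = (\<Prod>i\<in>UNIV. rou N (int (\<beta> i) * (int j * l i)))"
    unfolding mmonom_def by (simp add: rou_pow)
  also have "\<dots> = rou N (\<Sum>i\<in>UNIV. int (\<beta> i) * (int j * l i))" by (simp add: rou_prod)
  also have "(\<Sum>i\<in>UNIV. int (\<beta> i) * (int j * l i)) = int j * (\<Sum>i\<in>UNIV. int (\<beta> i) * l i)"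
    by (simp add: sum_distrib_left algebra_simps)
  finally show ?thesis .
qed

lemma small_dvd: "\<bar>x\<bar> < int N \<Longrightarrow> int N dvd x \<longleftrightarrow> x = 0"
  using dvd_imp_le_int[of x "int N"] by auto

lemma step3:
  fixes p :: "'n::finite mindex \<Rightarrow> complex" and A :: "'n mindex set"
  assumes Adef: "A = {\<beta>. p \<beta> \<noteq> 0}" and finA: "finite A"
    and coords: "\<And>\<beta> i. \<beta> \<in> A \<Longrightarrow> \<beta> i < B"
    and sq: "(\<Sum>\<beta>\<in>A. (cmod (p \<beta>))^2) = 1"
    and bd: "\<And>w. (\<forall>i. cmod (w i) = 1) \<Longrightarrow> cmod (\<Sum>\<beta>\<in>A. p \<beta> * mmonom w \<beta>) \<le> 1"
  shows "\<exists>\<alpha>. A = {\<alpha>}"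
proof -
  obtain k :: "'n \<Rightarrow> nat" where inj: "inj k"
    using finite_imp_inj_to_nat_seg[of "UNIV :: 'n set"] by auto
  define L where "L \<beta> = (\<Sum>i\<in>UNIV. \<beta> i * B ^ k i)" for \<beta> :: "'n mindex"
  have Linj: "\<beta> = \<gamma>" if "\<beta> \<in> A" "\<gamma> \<in> A" "L \<beta> = L \<gamma>" for \<beta> \<gamma>
  proof
    fix i show "\<beta> i = \<gamma> i"
      by (rule digits_inj[of UNIV k \<beta> B \<gamma>]) (use that inj coords in \<open>auto simp: L_def\<close>)
  qed
  have Ane: "A \<noteq> {}" using sq by auto
  show ?thesis
  proof (rule ccontr)
    assume nsing: "\<not> (\<exists>\<alpha>. A = {\<alpha>})"
    obtain \<beta>1 where b1: "\<beta>1 \<in> A" using Ane by auto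
    obtain \<beta>2 where b2: "\<beta>2 \<in> A" "\<beta>2 \<noteq> \<beta>1" using nsing b1 by blast
    define M where "M = Max (L ` A)"
    define \<mu> where "\<mu> = Min (L ` A)"
    have fLA: "finite (L ` A)" "L ` A \<noteq> {}" using finA Ane by auto
    obtain \<beta>M where bM: "\<beta>M \<in> A" "L \<beta>M = M" using Max_in[OF fLA] unfolding M_def by auto
    obtain \<gamma>m where gm: "\<gamma>m \<in> A" "L \<gamma>m = \<mu>" using Min_in[OF fLA] unfolding \<mu>_def by auto
    have le: "L \<beta> \<le> M" if "\<beta> \<in> A" for \<beta> using fLA that unfolding M_def by auto
    have ge: "\<mu> \<le> L \<beta>" if "\<beta> \<in> A" for \<beta> using fLA that unfolding \<mu>_def by auto
    have "L \<beta>1 \<noteq> L \<beta>2" using Linj b1 b2 by metis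
    then have muM: "\<mu> < M" using le[OF b1] le[OF b2(1)] ge[OF b1] ge[OF b2(1)] by linarith
    define N where "N = 2 * M + 1"
    have N0: "N > 0" unfolding N_def by simp
    define d where "d = int M - int \<mu>"
    define P where "P j = (\<Sum>\<beta>\<in>A. p \<beta> * rou N (int j * int (L \<beta>)))" for j :: nat
    have Pb: "cmod (P j) \<le> 1" for j
    proof -
      have "cmod (\<Sum>\<beta>\<in>A. p \<beta> * mmonom (\<lambda>i. rou N (int j * int (B ^ k i))) \<beta>) \<le> 1"
        by (rule bd) simp
      moreover have "mmonom (\<lambda>i. rou N (int j * int (B ^ k i))) \<beta> = rou N (int j * int (L \<beta>))" for \<beta>
        unfolding mmonom_rou L_def by simp
      ultimately show ?thesis unfolding P_def by simp
    qed
    have key: "(\<Sum>j<N. P j * cnj (P j) * rou N (int j * e)) =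
        of_nat N * (\<Sum>\<beta>\<in>A. \<Sum>\<gamma>\<in>A. if int N dvd (int (L \<beta>) - int (L \<gamma>) + e) then p \<beta> * cnj (p \<gamma>) else 0)"
      for e :: int
    proof -
      have pt: "P j * cnj (P j) * rou N (int j * e) =
          (\<Sum>\<beta>\<in>A. \<Sum>\<gamma>\<in>A. p \<beta> * cnj (p \<gamma>) * rou N (int j * (int (L \<beta>) - int (L \<gamma>) + e)))" for j
      proof -
        have r: "rou N (int j * (x - y + e)) = rou N (int j * x) * rou N (- (int j * y)) * rou N (int j * e)"
          for x y :: int
          by (simp add: rou_add[symmetric] algebra_simps)
        have "P j * cnj (P j) = (\<Sum>\<beta>\<in>A. \<Sum>\<gamma>\<in>A. (p \<beta> * rou N (int j * int (L \<beta>))) * cnj (p \<gamma> * rou N (int j * int (L \<gamma>))))"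
          unfolding P_def cnj_sum sum_product ..
        then have "P j * cnj (P j) * rou N (int j * e) = (\<Sum>\<beta>\<in>A. \<Sum>\<gamma>\<in>A. (p \<beta> * rou N (int j * int (L \<beta>))) * cnj (p \<gamma> * rou N (int j * int (L \<gamma>))) * rou N (int j * e))"
          by (simp add: sum_distrib_right)
        then show ?thesis
          by (simp add: r rou_cnj mult_ac)
      qed
      have "(\<Sum>j<N. P j * cnj (P j) * rou N (int j * e)) =
          (\<Sum>\<beta>\<in>A. \<Sum>\<gamma>\<in>A. p \<beta> * cnj (p \<gamma>) * (\<Sum>j<N. rou N (int j * (int (L \<beta>) - int (L \<gamma>) + e))))"
        unfolding pt sum_distrib_left
        by (subst sum.swap) (intro sum.cong refl, subst sum.swap, simp)
      also have "\<dots> = of_nat N * (\<Sum>\<beta>\<in>A. \<Sum>\<gamma>\<in>A. if int N dvd (int (L \<beta>) - int (L \<gamma>) + e) then p \<beta> * cnj (p \<gamma>) else 0)"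
        unfolding rou_sum[OF N0] sum_distrib_left by (intro sum.cong refl) auto
      finally show ?thesis .
    qed
    have k0: "(\<Sum>j<N. P j * cnj (P j)) = of_nat N"
    proof -
      have "(\<Sum>j<N. P j * cnj (P j)) = (\<Sum>j<N. P j * cnj (P j) * rou N (int j * 0))" by simp
      also have "\<dots> = of_nat N * (\<Sum>\<beta>\<in>A. \<Sum>\<gamma>\<in>A. if \<gamma> = \<beta> then p \<beta> * cnj (p \<gamma>) else 0)"
        unfolding key
      proof (intro arg_cong2[where f = "(*)"] refl sum.cong)
        fix \<beta> \<gamma> assume bg: "\<beta> \<in> A" "\<gamma> \<in> A"
        have "\<bar>int (L \<beta>) - int (L \<gamma>) + 0\<bar> < int N" using le[OF bg(1)] le[OF bg(2)] unfolding N_def by linarith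
        then have "int N dvd (int (L \<beta>) - int (L \<gamma>) + 0) \<longleftrightarrow> \<gamma> = \<beta>"
          using small_dvd Linj[OF bg] by auto
        then show "(if int N dvd (int (L \<beta>) - int (L \<gamma>) + 0) then p \<beta> * cnj (p \<gamma>) else 0) =
            (if \<gamma> = \<beta> then p \<beta> * cnj (p \<gamma>) else 0)" by simp
      qed
      also have "\<dots> = of_nat N * (\<Sum>\<beta>\<in>A. p \<beta> * cnj (p \<beta>))"
        using finA by (simp add: sum.delta)
      also have "(\<Sum>\<beta>\<in>A. p \<beta> * cnj (p \<beta>)) = of_real (\<Sum>\<beta>\<in>A. (cmod (p \<beta>))^2)"
        by (simp only: of_real_sum complex_norm_square)
      also have "of_nat N * complex_of_real (\<Sum>\<beta>\<in>A. (cmod (p \<beta>))^2) = of_nat N" using sq by simp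
      finally show ?thesis .
    qed
    have each: "P j * cnj (P j) = 1" if "j < N" for j
    proof -
      have "of_real (\<Sum>j<N. (cmod (P j))^2) = (of_nat N :: complex)"
        using k0 by (simp only: of_real_sum complex_norm_square)
      then have s: "(\<Sum>j<N. (cmod (P j))^2) = real N"
        by (metis of_real_eq_iff of_real_of_nat_eq)
      have "(\<Sum>j<N. 1 - (cmod (P j))^2) = 0" using s by (simp add: sum_subtractf)
      moreover have "0 \<le> 1 - (cmod (P j))^2" for j using Pb[of j] norm_ge_zero[of "P j"]
        by (simp add: abs_square_le_1)
      ultimately have "\<forall>j\<in>{..<N}. 1 - (cmod (P j))^2 = 0"
        by (subst sum_nonneg_eq_0_iff[symmetric]) auto
      then have "(cmod (P j))^2 = 1" using that by auto
      then show ?thesis by (metis complex_norm_square of_real_1)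
    qed
    have "of_nat N * p \<beta>M * cnj (p \<gamma>m) = 0"
    proof -
      have "(\<Sum>j<N. P j * cnj (P j) * rou N (int j * (-d))) = (\<Sum>j<N. rou N (int j * (-d)))"
        using each by simp
      also have "\<dots> = 0"
      proof -
        have "\<bar>-d\<bar> < int N" "-d \<noteq> 0" using muM le[OF gm(1)] unfolding d_def N_def bM(2)[symmetric] gm(2)[symmetric] by linarith+
        then show ?thesis unfolding rou_sum[OF N0] using small_dvd by auto
      qed
      finally have z: "(\<Sum>j<N. P j * cnj (P j) * rou N (int j * (-d))) = 0" .
      have "(\<Sum>j<N. P j * cnj (P j) * rou N (int j * (-d))) = of_nat N * (\<Sum>\<beta>\<in>A. \<Sum>\<gamma>\<in>A. if \<beta> = \<beta>M \<and> \<gamma> = \<gamma>m then p \<beta> * cnj (p \<gamma>) else 0)"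
        unfolding key
      proof (intro arg_cong2[where f = "(*)"] refl sum.cong)
        fix \<beta> \<gamma> assume bg: "\<beta> \<in> A" "\<gamma> \<in> A"
        have "\<bar>int (L \<beta>) - int (L \<gamma>) + - d\<bar> < int N" using le[OF bg(1)] le[OF bg(2)] ge[OF bg(1)] ge[OF bg(2)] muM
          unfolding N_def d_def by linarith
        then have "int N dvd (int (L \<beta>) - int (L \<gamma>) + - d) \<longleftrightarrow> L \<beta> = M \<and> L \<gamma> = \<mu>"
          using small_dvd le[OF bg(1)] ge[OF bg(2)] unfolding d_def by auto
        also have "\<dots> \<longleftrightarrow> \<beta> = \<beta>M \<and> \<gamma> = \<gamma>m" using Linj bg bM gm by metis
        finally show "(if int N dvd (int (L \<beta>) - int (L \<gamma>) + - d) then p \<beta> * cnj (p \<gamma>) else 0) =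
            (if \<beta> = \<beta>M \<and> \<gamma> = \<gamma>m then p \<beta> * cnj (p \<gamma>) else 0)" by simp
      qed
      also have "\<dots> = of_nat N * (\<Sum>\<beta>\<in>A. if \<beta> = \<beta>M then (\<Sum>\<gamma>\<in>A. if \<gamma> = \<gamma>m then p \<beta> * cnj (p \<gamma>) else 0) else 0)"
        by (intro arg_cong2[where f = "(*)"] refl sum.cong) auto
      also have "\<dots> = of_nat N * (p \<beta>M * cnj (p \<gamma>m))"
        using finA bM(1) gm(1) by (simp add: sum.delta)
      finally show ?thesis using z by simp
    qed
    moreover have "p \<beta>M \<noteq> 0" "p \<gamma>m \<noteq> 0" using bM gm Adef by auto
    ultimately show False using N0 by simp
  qed
qed



lemma step2_r:
  fixes \<phi> p :: "'n::finite mindex \<Rightarrow> complex"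
  assumes schur: "schur_class \<phi>"
    and coef: "\<And>\<beta>. mdeg \<beta> \<le> m \<Longrightarrow> \<phi> \<beta> = p \<beta>"
    and hom: "\<And>\<beta>. p \<beta> \<noteq> 0 \<Longrightarrow> mdeg \<beta> = m"
    and Adef: "A = {\<beta>. p \<beta> \<noteq> 0}" and finA: "finite A"
    and w: "\<And>i. cmod (w i) = 1"
    and r: "0 < r" "r < 1" and eps: "\<epsilon> > 0"
  shows "r ^ m * cmod (\<Sum>\<beta>\<in>A. p \<beta> * mmonom w \<beta>) \<le> 1 + \<epsilon>"
proof -
  define a where "a \<beta> = cmod (\<phi> \<beta>) * r ^ mdeg \<beta>" for \<beta>
  have z0: "(\<lambda>_::'n. complex_of_real r) \<in> polydisc" using r by (simp add: polydisc_def)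
  have mm0: "mmonom (\<lambda>_::'n. complex_of_real r) \<beta> = complex_of_real (r ^ mdeg \<beta>)" for \<beta>
    unfolding mmonom_def mdeg_def by (simp add: power_sum)
  have asum: "a summable_on UNIV"
  proof -
    have "(\<lambda>\<beta>. cmod (\<phi> \<beta> * mmonom (\<lambda>_::'n. complex_of_real r) \<beta>)) summable_on UNIV"
      using schur z0 unfolding schur_class_def by blast
    then show ?thesis using r unfolding a_def mm0 by (simp add: norm_mult norm_power)
  qed
  have anonneg: "a \<beta> \<ge> 0" for \<beta> using r unfolding a_def by simp
  obtain F where F: "finite F" "dist (sum a F) (infsum a UNIV) \<le> \<epsilon>"
    using infsum_finite_approximation[OF asum eps] by auto
  define N where "N = Suc (m + (\<Sum>\<beta>\<in>F. mdeg \<beta>))"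
  define Y where "Y = {\<beta>::'n mindex. mdeg \<beta> < N}"
  have finY: "finite Y" unfolding Y_def by (rule finite_mdeg_less)
  have FY: "F \<subseteq> Y"
  proof
    fix \<beta> assume "\<beta> \<in> F"
    then have "mdeg \<beta> \<le> (\<Sum>\<beta>\<in>F. mdeg \<beta>)" using F(1) by (intro member_le_sum) auto
    then show "\<beta> \<in> Y" unfolding Y_def N_def by simp
  qed
  have tail: "infsum a (-Y) \<le> \<epsilon>"
  proof -
    have "infsum a (Y \<union> -Y) = infsum a Y + infsum a (-Y)"
      by (rule infsum_Un_disjoint) (auto intro: summable_on_subset_banach[OF asum])
    then have "infsum a UNIV = sum a Y + infsum a (-Y)" using finY by simp
    moreover have "sum a F \<le> sum a Y" using finY FY anonneg by (intro sum_mono2) auto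
    moreover have "infsum a UNIV - sum a F \<le> \<epsilon>" using F(2) by (simp add: dist_real_def)
    ultimately show ?thesis by linarith
  qed
  have N0: "N > 0" and Nm: "m < N" unfolding N_def by auto
  define t where "t j = complex_of_real r * rou N (int j)" for j :: nat
  define z where "z j = (\<lambda>i. t j * w i)" for j
  have zpd: "z j \<in> polydisc" for j
    using r w unfolding z_def t_def polydisc_def by (simp add: norm_mult)
  have mmz: "mmonom (z j) \<beta> = complex_of_real (r ^ mdeg \<beta>) * rou N (int j * int (mdeg \<beta>)) * mmonom w \<beta>" for j \<beta>
    unfolding z_def mmonom_scale t_def by (simp add: power_mult_distrib rou_pow mult_ac)
  have sz: "(\<lambda>\<beta>. \<phi> \<beta> * mmonom (z j) \<beta>) summable_on UNIV" for j
    using schur zpd[of j] unfolding schur_class_def by (auto intro: abs_summable_summable)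
  have bz: "cmod (infsum (\<lambda>\<beta>. \<phi> \<beta> * mmonom (z j) \<beta>) UNIV) \<le> 1" for j
    using schur zpd[of j] unfolding schur_class_def by auto
  define c where "c j = rou N (int j * (int N - int m)) / of_nat N" for j
  define g where "g \<beta> = \<phi> \<beta> * complex_of_real (r ^ mdeg \<beta>) * mmonom w \<beta> *
      (if int N dvd (int (mdeg \<beta>) + int N - int m) then 1 else 0)" for \<beta>
  have avg: "(\<Sum>j<N. c j * infsum (\<lambda>\<beta>. \<phi> \<beta> * mmonom (z j) \<beta>) UNIV) = infsum g UNIV"
  proof -
    have "(\<Sum>j<N. c j * infsum (\<lambda>\<beta>. \<phi> \<beta> * mmonom (z j) \<beta>) UNIV)
        = (\<Sum>j<N. infsum (\<lambda>\<beta>. c j * (\<phi> \<beta> * mmonom (z j) \<beta>)) UNIV)"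
      by (intro sum.cong refl infsum_cmult_right[symmetric]) (use sz in auto)
    also have "\<dots> = infsum (\<lambda>\<beta>. \<Sum>j<N. c j * (\<phi> \<beta> * mmonom (z j) \<beta>)) UNIV"
      using infsum_sum_swap[of "{..<N}" "\<lambda>j \<beta>. c j * (\<phi> \<beta> * mmonom (z j) \<beta>)" UNIV]
        summable_on_cmult_right[OF sz] by simp
    also have "\<dots> = infsum g UNIV"
    proof (rule infsum_cong)
      fix \<beta> :: "'n mindex"
      have e: "rou N (int j * (int (mdeg \<beta>) + int N - int m)) = rou N (int j * (int N - int m)) * rou N (int j * int (mdeg \<beta>))" for j
        by (simp add: rou_add[symmetric] algebra_simps)
      have "(\<Sum>j<N. c j * (\<phi> \<beta> * mmonom (z j) \<beta>)) =
          (\<phi> \<beta> * complex_of_real (r ^ mdeg \<beta>) * mmonom w \<beta> / of_nat N) * (\<Sum>j<N. rou N (int j * (int (mdeg \<beta>) + int N - int m)))"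
        unfolding mmz c_def sum_distrib_left e by (intro sum.cong refl) (simp add: mult_ac)
      also have "\<dots> = g \<beta>" unfolding rou_sum[OF N0] g_def using N0 by simp
      finally show "(\<Sum>j<N. c j * (\<phi> \<beta> * mmonom (z j) \<beta>)) = g \<beta>" .
    qed
    finally show ?thesis .
  qed
  have avgb: "cmod (infsum g UNIV) \<le> 1"
  proof -
    have "cmod (infsum g UNIV) \<le> (\<Sum>j<N. cmod (c j * infsum (\<lambda>\<beta>. \<phi> \<beta> * mmonom (z j) \<beta>) UNIV))"
      unfolding avg[symmetric] by (rule norm_sum)
    also have "\<dots> \<le> (\<Sum>j<N. 1 / real N)"
    proof (rule sum_mono)
      fix j
      have "cmod (c j) = 1 / real N" unfolding c_def by (simp add: norm_divide)
      then show "cmod (c j * infsum (\<lambda>\<beta>. \<phi> \<beta> * mmonom (z j) \<beta>) UNIV) \<le> 1 / real N"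
        using bz[of j] N0 by (simp add: norm_mult divide_le_eq)
    qed
    also have "\<dots> = 1" using N0 by simp
    finally show ?thesis .
  qed
  define g1 where "g1 \<beta> = (if \<beta> \<in> A then p \<beta> * complex_of_real (r ^ m) * mmonom w \<beta> else 0)" for \<beta>
  define g2 where "g2 \<beta> = g \<beta> - g1 \<beta>" for \<beta>
  have g1g: "g1 \<beta> = (if mdeg \<beta> = m then g \<beta> else 0)" for \<beta>
  proof (cases "mdeg \<beta> = m")
    case True
    then show ?thesis using coef[of \<beta>] unfolding g1_def g_def Adef by auto
  next
    case False
    then show ?thesis using hom[of \<beta>] unfolding g1_def Adef by auto
  qed
  have nrm_g: "cmod (g \<beta>) \<le> a \<beta>" for \<beta>
    using r unfolding g_def a_def by (simp add: norm_mult norm_mmonom w norm_power)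
  have nrm_g1: "cmod (g1 \<beta>) \<le> a \<beta>" for \<beta> using nrm_g[of \<beta>] anonneg[of \<beta>] unfolding g1g by auto
  have g2g: "g2 \<beta> = (if mdeg \<beta> = m then 0 else g \<beta>)" for \<beta> unfolding g2_def g1g by auto
  have nrm_g2: "cmod (g2 \<beta>) \<le> a \<beta>" for \<beta> using nrm_g[of \<beta>] r anonneg[of \<beta>] unfolding g2g by auto
  have g2_0: "g2 \<beta> = 0" if "\<beta> \<in> Y" for \<beta>
  proof (cases "mdeg \<beta> = m")
    case True then show ?thesis unfolding g2g by simp
  next
    case False
    show ?thesis
    proof (cases "mdeg \<beta> < m")
      case True
      then have "\<phi> \<beta> = 0" using coef[of \<beta>] hom[of \<beta>] by fastforce
      then show ?thesis unfolding g2g g_def by simp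
    next
      case False2: False
      have lt: "mdeg \<beta> < N" using that unfolding Y_def by simp
      have "\<not> int N dvd (int (mdeg \<beta>) + int N - int m)"
      proof
        assume "int N dvd (int (mdeg \<beta>) + int N - int m)"
        then have "int N dvd (int (mdeg \<beta>) + int N - int m - int N)" using dvd_diff[OF _ dvd_refl, of "int N" "int (mdeg \<beta>) + int N - int m"] by blast
        moreover have "0 < int (mdeg \<beta>) + int N - int m - int N" using False False2 by simp
        ultimately have "int N \<le> int (mdeg \<beta>) + int N - int m - int N" by (rule zdvd_imp_le)
        then show False using lt by simp
      qed
      then show ?thesis unfolding g2g g_def by simp
    qed
  qed
  have abs_a: "(\<lambda>x. norm (h x)) summable_on S" if "\<And>x. cmod (h x) \<le> a x" for h :: "'n mindex \<Rightarrow> complex" and S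
    by (rule summable_on_comparison_test[OF summable_on_subset_banach[OF asum subset_UNIV]]) (use that in auto)
  have s1: "g1 summable_on UNIV" by (rule abs_summable_summable, rule abs_a, rule nrm_g1)
  have s2: "g2 summable_on UNIV" by (rule abs_summable_summable, rule abs_a, rule nrm_g2)
  have split: "infsum g UNIV = infsum g1 UNIV + infsum g2 UNIV"
    using infsum_add[OF s1 s2] unfolding g2_def by simp
  have i1: "infsum g1 UNIV = complex_of_real (r ^ m) * (\<Sum>\<beta>\<in>A. p \<beta> * mmonom w \<beta>)"
  proof -
    have "infsum g1 UNIV = infsum g1 A" by (rule infsum_cong_neutral) (auto simp: g1_def)
    also have "\<dots> = sum g1 A" using finA by simp
    also have "\<dots> = complex_of_real (r ^ m) * (\<Sum>\<beta>\<in>A. p \<beta> * mmonom w \<beta>)"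
      unfolding sum_distrib_left g1_def by (intro sum.cong refl) (simp add: mult_ac)
    finally show ?thesis .
  qed
  have i2: "cmod (infsum g2 UNIV) \<le> \<epsilon>"
  proof -
    have "infsum g2 UNIV = infsum g2 (-Y)" by (rule infsum_cong_neutral) (auto simp: g2_0)
    then have "cmod (infsum g2 UNIV) \<le> infsum (\<lambda>x. cmod (g2 x)) (-Y)"
      using norm_infsum_bound[of g2 "-Y"] abs_a[OF nrm_g2] by simp
    also have "\<dots> \<le> infsum a (-Y)"
      by (rule infsum_mono) (use abs_a[OF nrm_g2] summable_on_subset_banach[OF asum] nrm_g2 in auto)
    also have "\<dots> \<le> \<epsilon>" by (rule tail)
    finally show ?thesis .
  qed
  have "r ^ m * cmod (\<Sum>\<beta>\<in>A. p \<beta> * mmonom w \<beta>) = cmod (infsum g1 UNIV)"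
    using r unfolding i1 by (simp add: norm_mult norm_power)
  also have "\<dots> = cmod (infsum g UNIV - infsum g2 UNIV)" using split by simp
  also have "\<dots> \<le> cmod (infsum g UNIV) + cmod (infsum g2 UNIV)" by (rule norm_triangle_ineq4)
  also have "\<dots> \<le> 1 + \<epsilon>" using avgb i2 by simp
  finally show ?thesis .
qed


lemma step2:
  fixes \<phi> p :: "'n::finite mindex \<Rightarrow> complex"
  assumes schur: "schur_class \<phi>"
    and coef: "\<And>\<beta>. mdeg \<beta> \<le> m \<Longrightarrow> \<phi> \<beta> = p \<beta>"
    and hom: "\<And>\<beta>. p \<beta> \<noteq> 0 \<Longrightarrow> mdeg \<beta> = m"
    and Adef: "A = {\<beta>. p \<beta> \<noteq> 0}" and finA: "finite A"
    and w: "\<And>i. cmod (w i) = 1"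
  shows "cmod (\<Sum>\<beta>\<in>A. p \<beta> * mmonom w \<beta>) \<le> 1"
proof -
  define c where "c = cmod (\<Sum>\<beta>\<in>A. p \<beta> * mmonom w \<beta>)"
  have rle: "r ^ m * c \<le> 1" if "0 < r" "r < 1" for r
    by (rule field_le_epsilon) (use step2_r[OF assms that] in \<open>simp add: c_def\<close>)
  show ?thesis unfolding c_def[symmetric]
  proof (rule ccontr)
    assume "\<not> c \<le> 1"
    then have c1: "c > 1" by simp
    define \<delta> where "\<delta> = (1 - 1 / c) / (2 * (real m + 1))"
    have d0: "0 < \<delta>" using c1 unfolding \<delta>_def by (intro divide_pos_pos) (auto simp: field_simps)
    have d1: "\<delta> < 1"
    proof -
      have "1 / c > 0" using c1 by simp
      moreover have "real m \<ge> 0" by simp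
      ultimately have "1 - 1 / c < 2 * (real m + 1)" by argo
      then show ?thesis unfolding \<delta>_def by (subst pos_divide_less_eq) auto
    qed
    have md: "real m * \<delta> \<le> (1 - 1 / c) / 2"
    proof -
      have "real m * \<delta> = (1 - 1 / c) / 2 * (real m / (real m + 1))" unfolding \<delta>_def by (simp add: field_simps)
      also have "\<dots> \<le> (1 - 1 / c) / 2 * 1"
        by (rule mult_left_mono) (use c1 in \<open>auto simp: field_simps\<close>)
      finally show ?thesis by simp
    qed
    have "1 + real m * (- \<delta>) \<le> (1 + - \<delta>) ^ m" by (rule Bernoulli_inequality) (use d1 in simp)
    then have b: "(1 + 1 / c) / 2 \<le> (1 - \<delta>) ^ m" using md by simp
    have "(1 + 1 / c) / 2 * c \<le> (1 - \<delta>) ^ m * c" using b c1 by (intro mult_right_mono) auto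
    also have "\<dots> \<le> 1" using rle[of "1 - \<delta>"] d0 d1 by simp
    finally have "(c + 1) / 2 \<le> 1" using c1 by (simp add: field_simps)
    then show False using c1 by simp
  qed
qed



theorem theorem3p2:
  fixes m :: nat and p :: "'n::finite mindex \<Rightarrow> complex"
  assumes "p \<in> homog m" and "h2norm p = 1"
  shows "(\<exists>\<phi>. schur_class \<phi> \<and> (\<forall>q\<in>Qspace m. compress m \<phi> q = compress m p q))
         \<longleftrightarrow> (\<exists>u \<alpha>. cmod u = 1 \<and> p = (\<lambda>\<beta>. u * monomial_coeffs \<alpha> \<beta>))"
proof
  assume "\<exists>u \<alpha>. cmod u = 1 \<and> p = (\<lambda>\<beta>. u * monomial_coeffs \<alpha> \<beta>)"
  then obtain u \<alpha> where u: "cmod u = 1" and pe: "p = (\<lambda>\<beta>. u * monomial_coeffs \<alpha> \<beta>)" by blast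
  have "schur_class p"
    unfolding schur_class_def
  proof
    fix z :: "'n \<Rightarrow> complex" assume z: "z \<in> polydisc"
    define f where "f \<beta> = p \<beta> * mmonom z \<beta>" for \<beta>
    have f0: "f \<beta> = 0" if "\<beta> \<noteq> \<alpha>" for \<beta> using that unfolding f_def pe monomial_coeffs_def by simp
    have "(\<lambda>\<beta>. norm (f \<beta>)) summable_on UNIV \<longleftrightarrow> (\<lambda>\<beta>. norm (f \<beta>)) summable_on {\<alpha>}"
      by (rule summable_on_cong_neutral) (auto simp: f0)
    then have s: "(\<lambda>\<beta>. norm (f \<beta>)) summable_on UNIV" by simp
    have "infsum f UNIV = infsum f {\<alpha>}" by (rule infsum_cong_neutral) (auto simp: f0)
    then have i: "infsum f UNIV = u * mmonom z \<alpha>" unfolding f_def pe monomial_coeffs_def by simp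
    have "cmod (mmonom z \<alpha>) \<le> 1"
      unfolding mmonom_def prod_norm[symmetric] norm_power
    proof (rule prod_le_1)
      fix i
      have "cmod (z i) \<le> 1" using z by (simp add: polydisc_def less_imp_le)
      then show "0 \<le> cmod (z i) ^ \<alpha> i \<and> cmod (z i) ^ \<alpha> i \<le> 1" by (simp add: power_le_one)
    qed
    then have "cmod (infsum f UNIV) \<le> 1" unfolding i using u by (simp add: norm_mult)
    then show "(\<lambda>\<alpha>. cmod (p \<alpha> * mmonom z \<alpha>)) summable_on UNIV \<and> cmod (\<Sum>\<^sub>\<infinity>\<alpha>. p \<alpha> * mmonom z \<alpha>) \<le> 1"
      using s unfolding f_def by simp
  qed
  then show "\<exists>\<phi>. schur_class \<phi> \<and> (\<forall>q\<in>Qspace m. compress m \<phi> q = compress m p q)" by blast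
next
  assume "\<exists>\<phi>. schur_class \<phi> \<and> (\<forall>q\<in>Qspace m. compress m \<phi> q = compress m p q)"
  then obtain \<phi> where schur: "schur_class \<phi>" and comp: "\<forall>q\<in>Qspace m. compress m \<phi> q = compress m p q" by blast
  have hom: "mdeg \<beta> = m" if "p \<beta> \<noteq> 0" for \<beta> using assms(1) that unfolding homog_def by auto
  define q0 :: "'n mindex \<Rightarrow> complex" where "q0 = monomial_coeffs (\<lambda>_. 0)"
  have q0Q: "q0 \<in> Qspace m" unfolding q0_def Qspace_def monomial_coeffs_def by (simp add: mdeg_def)
  have mc: "mult_coeffs f q0 \<beta> = f \<beta>" for f :: "'n mindex \<Rightarrow> complex" and \<beta>
  proof -
    define S where "S = {\<alpha>::'n mindex. \<forall>i. \<alpha> i \<le> \<beta> i}"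
    have finS: "finite S"
    proof (rule finite_subset[OF _ finite_mdeg_less[of "Suc (mdeg \<beta>)"]])
      show "S \<subseteq> {\<alpha>. mdeg \<alpha> < Suc (mdeg \<beta>)}"
      proof
        fix \<alpha> assume "\<alpha> \<in> S"
        then have "mdeg \<alpha> \<le> mdeg \<beta>" unfolding S_def mdeg_def by (auto intro!: sum_mono)
        then show "\<alpha> \<in> {\<alpha>. mdeg \<alpha> < Suc (mdeg \<beta>)}" by simp
      qed
    qed
    have "mult_coeffs f q0 \<beta> = (\<Sum>\<alpha>\<in>S. if \<alpha> = \<beta> then f \<alpha> else 0)"
      unfolding mult_coeffs_def S_def[symmetric]
    proof (intro sum.cong refl)
      fix \<alpha> assume "\<alpha> \<in> S"
      then have "(\<beta> - \<alpha> = (\<lambda>_. 0)) \<longleftrightarrow> \<alpha> = \<beta>" unfolding S_def by (auto simp: fun_eq_iff intro: antisym)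
      then show "f \<alpha> * q0 (\<beta> - \<alpha>) = (if \<alpha> = \<beta> then f \<alpha> else 0)"
        unfolding q0_def monomial_coeffs_def by auto
    qed
    also have "\<dots> = f \<beta>" using finS by (simp add: sum.delta' S_def)
    finally show ?thesis .
  qed
  have coef: "\<phi> \<beta> = p \<beta>" if "mdeg \<beta> \<le> m" for \<beta>
  proof -
    have "compress m \<phi> q0 \<beta> = compress m p q0 \<beta>" using comp q0Q by simp
    then show ?thesis using that unfolding compress_def proj_Q_def mc by simp
  qed
  define A where "A = {\<beta>. p \<beta> \<noteq> 0}"
  have finA: "finite A"
    by (rule finite_subset[OF _ finite_mdeg_less[of "Suc m"]]) (auto simp: A_def hom)
  have coords: "\<beta> i < Suc m" if "\<beta> \<in> A" for \<beta> i
    using coord_le_mdeg[of \<beta> i] hom[of \<beta>] that unfolding A_def by auto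
  have sq: "(\<Sum>\<beta>\<in>A. (cmod (p \<beta>))^2) = 1"
  proof -
    have "infsum (\<lambda>\<beta>. (cmod (p \<beta>))^2) UNIV = 1" using assms(2) unfolding h2norm_def by simp
    moreover have "infsum (\<lambda>\<beta>. (cmod (p \<beta>))^2) UNIV = infsum (\<lambda>\<beta>. (cmod (p \<beta>))^2) A"
      by (rule infsum_cong_neutral) (auto simp: A_def)
    ultimately show ?thesis using finA by simp
  qed
  have bd: "cmod (\<Sum>\<beta>\<in>A. p \<beta> * mmonom w \<beta>) \<le> 1" if "\<forall>i. cmod (w i) = 1" for w
    by (rule step2[OF schur coef hom A_def finA]) (use that in auto)
  have "\<exists>\<alpha>. A = {\<alpha>}"
    by (rule step3[of A p "Suc m"]) (use A_def finA coords sq bd in auto)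
  then obtain \<alpha> where A1: "A = {\<alpha>}" by blast
  have pe: "p = (\<lambda>\<beta>. p \<alpha> * monomial_coeffs \<alpha> \<beta>)"
  proof
    fix \<beta> show "p \<beta> = p \<alpha> * monomial_coeffs \<alpha> \<beta>"
      using A1 unfolding A_def monomial_coeffs_def by (cases "\<beta> = \<alpha>") auto
  qed
  have "(cmod (p \<alpha>))^2 = 1" using sq A1 by simp
  then have "cmod (p \<alpha>) = 1" using norm_ge_zero[of "p \<alpha>"] by (auto simp: power2_eq_1_iff)
  then show "\<exists>u \<alpha>. cmod u = 1 \<and> p = (\<lambda>\<beta>. u * monomial_coeffs \<alpha> \<beta>)" using pe by blast
qed


end
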